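(* For all $\lambda\in[0,1]$ and $\Delta_1,\Delta_2,\Delta_3\in[0,\frac12]$, $C_{\mathrm{SKL}}((\mathrm{BSC}_{\Delta_1}\times\mathrm{BSC}_{\Delta_2}\times\mathrm{BSC}_{\Delta_3})\circ B_{4,\lambda})\le\lambda^2\sum_{i=1}^3C_{\mathrm{SKL}}(\mathrm{BSC}_{\Delta_i})$, and the inequality is strict when $0<\lambda<1$ and $\min\{\Delta_1,\Delta_2,\Delta_3\}<\frac12$.
   Context: $\mathrm{BSC}_\Delta:\{\pm\}\to\{\pm\}$ flips the input with probability $\Delta$. $B_{4,\lambda}:\{\pm\}\to\{\pm\}^3$ is the kernel $B_{4,\lambda}(x_1,x_2,x_3|y)=\lambda+\frac18(1-\lambda)$ if $x_1=x_2=x_3=y$ and $\frac18(1-\lambda)$ otherwise. $\times$ is the tensor product of channels. For a binary-input channel $P$, $C_{\mathrm{SKL}}(P)$ is the SKL information ($f$-information with $f(x)=(x-1)\log x$) between $X\sim\mathrm{Unif}(\{\pm\})$ and the output of $P$; in particular $C_{\mathrm{SKL}}(\mathrm{BSC}_\Delta)=\theta\,\mathrm{arctanh}\,\theta$ with $\theta=1-2\Delta$. *)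

theory Defs
  imports "HOL-Analysis.Analysis"
begin

text \<open>Signs {+,-} are encoded as bool (True = +). A channel with input type 'a and
output type 'b is a kernel W :: 'a => 'b => real, W x y = probability of output y given input x.\<close>

definition BSC :: "real \<Rightarrow> bool \<Rightarrow> bool \<Rightarrow> real" where
  "BSC \<Delta> x y = (if x = y then 1 - \<Delta> else \<Delta>)"

definition B4 :: "real \<Rightarrow> bool \<Rightarrow> bool \<times> bool \<times> bool \<Rightarrow> real" where
  "B4 lam y x = (case x of (x1, x2, x3) \<Rightarrow>
      (if x1 = y \<and> x2 = y \<and> x3 = y then lam + (1 - lam) / 8 else (1 - lam) / 8))"

definition tensor3 ::
  "('a1 \<Rightarrow> 'b1 \<Rightarrow> real) \<Rightarrow> ('a2 \<Rightarrow> 'b2 \<Rightarrow> real) \<Rightarrow> ('a3 \<Rightarrow> 'b3 \<Rightarrow> real)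
   \<Rightarrow> 'a1 \<times> 'a2 \<times> 'a3 \<Rightarrow> 'b1 \<times> 'b2 \<times> 'b3 \<Rightarrow> real" where
  "tensor3 P1 P2 P3 x z = (case x of (x1, x2, x3) \<Rightarrow> case z of (z1, z2, z3) \<Rightarrow>
      P1 x1 z1 * P2 x2 z2 * P3 x3 z3)"

text \<open>Composition P \<circ> B of channels (first B, then P), finite intermediate alphabet.\<close>
definition compose :: "('b::finite \<Rightarrow> 'c \<Rightarrow> real) \<Rightarrow> ('a \<Rightarrow> 'b \<Rightarrow> real) \<Rightarrow> 'a \<Rightarrow> 'c \<Rightarrow> real" where
  "compose P B y z = (\<Sum>x\<in>UNIV. B y x * P x z)"

text \<open>f(t) = (t-1) log t, extended by f(0) = +infinity (its limit).\<close>
definition skl_f :: "real \<Rightarrow> ereal" where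
  "skl_f t = (if t = 0 then \<infinity> else ereal ((t - 1) * ln t))"

text \<open>Term q f(p/q) of an f-divergence, with conventions 0 f(0/0) = 0 and
  p f(p/0)... = p * lim f(t)/t = +infinity for p > 0.\<close>
definition fterm :: "real \<Rightarrow> real \<Rightarrow> ereal" where
  "fterm p q = (if q = 0 then (if p = 0 then 0 else \<infinity>) else ereal q * skl_f (p / q))"

text \<open>SKL information I_f(X;Y) = D_f(P_XY || P_X P_Y) with X ~ Unif(bool), Y the channel output.\<close>
definition C_SKL :: "(bool \<Rightarrow> 'b::finite \<Rightarrow> real) \<Rightarrow> ereal" where
  "C_SKL W = (\<Sum>x\<in>UNIV. \<Sum>y\<in>UNIV.
      fterm (W x y / 2) ((1/2) * ((W True y + W False y) / 2)))"

end

theory Submission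
  imports Defs
begin

lemma amgm3: fixes x y z :: real assumes "x\<ge>0" "y\<ge>0" "z\<ge>0"
  shows "3*x*y*z \<le> x^3+y^3+z^3"
proof -
  have e: "x^3+y^3+z^3 - 3*x*y*z = (x+y+z)*((x-y)^2+(y-z)^2+(z-x)^2)/2"
    by (simp add: power2_eq_square power3_eq_cube algebra_simps)
  have "(x+y+z)*((x-y)^2+(y-z)^2+(z-x)^2)/2 \<ge> 0" using assms by simp
  with e show ?thesis by linarith
qed

lemma prod_cube_ge: fixes u1 u2 u3 :: real assumes "u1\<ge>0" "u2\<ge>0" "u3\<ge>0"
  shows "(1+u1*u2*u3)^3 \<le> (1+u1^3)*(1+u2^3)*(1+u3^3)"
proof -
  have a: "3*u1*u2*u3 \<le> u1^3+u2^3+u3^3" using amgm3 assms by blast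
  have b: "3*(u1*u2)*(u2*u3)*(u3*u1) \<le> (u1*u2)^3+(u2*u3)^3+(u3*u1)^3"
    using amgm3[of "u1*u2" "u2*u3" "u3*u1"] assms by simp
  have "(1+u1^3)*(1+u2^3)*(1+u3^3) - (1+u1*u2*u3)^3
     = (u1^3+u2^3+u3^3 - 3*u1*u2*u3) + ((u1*u2)^3+(u2*u3)^3+(u3*u1)^3 - 3*(u1*u2)*(u2*u3)*(u3*u1))"
    by (simp add: power2_eq_square power3_eq_cube algebra_simps)
  with a b show ?thesis by linarith
qed

lemma onevar_deriv: assumes "x > 0"
  shows "((\<lambda>x. 3 * ln x - 8*(x^3-1)/(1+x)^3) has_real_derivative 3*(x-1)^4/(x*(1+x)^4)) (at x)"
proof -
  have "((\<lambda>x. 3 * ln x - 8*(x^3-1)/(1+x)^3) has_real_derivative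
      3 * (1/x) - (8*(3*x^2)*(1+x)^3 - 8*(x^3-1)*(3*(1+x)^2)) / ((1+x)^3)^2) (at x)"
    using assms by (auto intro!: derivative_eq_intros)
  moreover have "3 * (1/x) - (8*(3*x^2)*(1+x)^3 - 8*(x^3-1)*(3*(1+x)^2)) / ((1+x)^3)^2
       = 3*(x-1)^4/(x*(1+x)^4)"
  proof -
    have h: "1+x \<noteq> 0" "x \<noteq> 0" using assms by auto
    show ?thesis using h by (simp add: field_simps) algebra
  qed
  ultimately show ?thesis by simp
qed

lemma onevar: fixes s :: real assumes "s > 1"
  shows "8*(s^3-1)/(1+s)^3 < 3 * ln s"
proof -
  define f where "f = (\<lambda>x::real. 3 * ln x - 8*(x^3-1)/(1+x)^3)"
  define s0 where "s0 = (1+s)/2"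
  have s0: "1 < s0" "s0 < s" using assms by (auto simp: s0_def)
  have "f 1 \<le> f s0"
    apply (rule DERIV_nonneg_imp_nondecreasing[of 1 s0 f])
    using s0 apply simp
    subgoal for x apply (rule exI[of _ "3*(x-1)^4/(x*(1+x)^4)"])
      using onevar_deriv[of x] unfolding f_def by auto
    done
  moreover have "f s0 < f s"
    apply (rule DERIV_pos_imp_increasing[of s0 s f])
    using s0 apply simp
    subgoal for x apply (rule exI[of _ "3*(x-1)^4/(x*(1+x)^4)"])
      using onevar_deriv[of x] s0 unfolding f_def by auto
    done
  moreover have "f 1 = 0" by (simp add: f_def)
  ultimately have "0 < f s" by linarith
  thus ?thesis by (simp add: f_def)
qed

lemma lemmaA:
  fixes a1 a2 a3 b1 b2 b3 :: real
  assumes pos: "a1>0" "a2>0" "a3>0" "b1>0" "b2>0" "b3>0"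
    and sum: "a1+b1=2" "a2+b2=2" "a3+b3=2"
    and pm: "a1*a2*a3 > b1*b2*b3"
  shows "a1*a2*a3 - b1*b2*b3 < ln (a1*a2*a3) - ln (b1*b2*b3)"
proof -
  define c1 c2 c3 where "c1 = a1/b1" "c2 = a2/b2" "c3 = a3/b3"
  define u1 u2 u3 where "u1 = root 3 c1" "u2 = root 3 c2" "u3 = root 3 c3"
  have cpos: "c1>0" "c2>0" "c3>0" using pos by (auto simp: c1_c2_c3_def)
  have upos: "u1>0" "u2>0" "u3>0" using cpos by (auto simp: u1_u2_u3_def)
  have ucube: "u1^3 = c1" "u2^3 = c2" "u3^3 = c3" using cpos by (auto simp: u1_u2_u3_def)
  define s where "s = u1*u2*u3"
  define p m where "p = a1*a2*a3" "m = b1*b2*b3"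
  have mpos: "m > 0" using pos by (simp add: p_m_def)
  have s3: "s^3 = p/m" using ucube pos
    by (simp add: s_def p_m_def c1_c2_c3_def power_mult_distrib)
  have ppos: "p > 0" using pos by (simp add: p_m_def)
  have "s^3 > 1" using s3 pm mpos by (simp add: p_m_def)
  moreover have "s \<ge> 0" using upos by (simp add: s_def)
  ultimately have s1: "s > 1" by (meson not_less power_le_one)
  have bc: "b1*(1+c1) = 2" "b2*(1+c2) = 2" "b3*(1+c3) = 2"
    using pos sum by (auto simp: c1_c2_c3_def field_simps)
  have m8: "m * ((1+c1)*(1+c2)*(1+c3)) = 8"
  proof -
    have "m * ((1+c1)*(1+c2)*(1+c3)) = (b1*(1+c1))*(b2*(1+c2))*(b3*(1+c3))"
      by (simp add: p_m_def algebra_simps)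
    thus ?thesis using bc by simp
  qed
  have ge: "(1+s)^3 \<le> (1+c1)*(1+c2)*(1+c3)"
    using prod_cube_ge[of u1 u2 u3] upos ucube by (simp add: s_def)
  have sp: "(1+s)^3 > 0" using s1 by simp
  have "m \<le> 8/(1+s)^3"
  proof -
    have "m * (1+s)^3 \<le> m * ((1+c1)*(1+c2)*(1+c3))" using ge mpos by simp
    thus ?thesis using m8 sp by (simp add: field_simps)
  qed
  hence "m*(s^3-1) \<le> 8/(1+s)^3*(s^3-1)" using \<open>s^3>1\<close>
    by (intro mult_right_mono) auto
  also have "\<dots> = 8*(s^3-1)/(1+s)^3" by simp
  also have "\<dots> < 3 * ln s" using onevar s1 by blast
  also have "3 * ln s = ln (s^3)" using s1 by (simp add: ln_realpow)
  also have "\<dots> = ln p - ln m" using s3 ppos mpos by (simp add: ln_div)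
  finally have "m*(s^3-1) < ln p - ln m" .
  moreover have "m*(s^3-1) = p - m" using s3 mpos by (simp add: field_simps)
  ultimately show ?thesis by (simp add: p_m_def)
qed



lemma F_deriv: fixes A B r x :: real assumes "1+x*A > 0" "1-x*B > 0"
  shows "((\<lambda>x. x*r - ln (1+x*A) + ln (1-x*B)) has_real_derivative
          (r*((1+x*A)*(1-x*B)) - (A+B)) / ((1+x*A)*(1-x*B))) (at x)"
proof -
  have "((\<lambda>x. x*r - ln (1+x*A) + ln (1-x*B)) has_real_derivative
          1*r - (0 + 1*A)/(1+x*A) + (0 - 1*B)/(1-x*B)) (at x)"
    using assms by (auto intro!: derivative_eq_intros)
  moreover have "1*r - (0 + 1*A)/(1+x*A) + (0 - 1*B)/(1-x*B)
     = (r*((1+x*A)*(1-x*B)) - (A+B)) / ((1+x*A)*(1-x*B))"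
    using assms by (simp add: field_simps)
  ultimately show ?thesis by simp
qed

lemma keyF:
  fixes p m r lam :: real
  assumes mpos: "m > 0" and m1: "m < 1" and pm: "p > m"
    and rdef: "r = ln p - ln m" and rA: "r > p - m"
    and l0: "0 < lam" and l1: "lam < 1"
  shows "ln (1-lam+lam*p) - ln (1-lam+lam*m) < lam * (ln p - ln m)"
proof -
  define A B where "A = p - 1" "B = 1 - m"
  have Bpos: "B > 0" using m1 by (simp add: A_B_def)
  have ppos: "p > 0" using pm mpos by simp
  define F where "F = (\<lambda>x. x*r - ln (1+x*A) + ln (1-x*B))"
  define Q where "Q = (\<lambda>x. (1+x*A)*(1-x*B))"
  define G where "G = (\<lambda>x. r * Q x - (A+B))"
  have u: "1+x*A > 0" if "0 \<le> x" "x \<le> 1" for x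
  proof -
    have "1+x*A = (1-x) + x*p" by (simp add: A_B_def algebra_simps)
    moreover have "x*p \<ge> 0" "1 - x \<ge> 0" using that ppos by auto
    moreover have "(1-x) + x*p > 0"
      using that ppos by (cases "x = 0") (auto intro: add_nonneg_pos)
    ultimately show ?thesis by simp
  qed
  have v: "1-x*B > 0" if "0 \<le> x" "x \<le> 1" for x
  proof -
    have "1-x*B = (1-x) + x*m" by (simp add: A_B_def algebra_simps)
    moreover have "(1-x) + x*m > 0"
      using that mpos by (cases "x = 0") (auto intro: add_nonneg_pos)
    ultimately show ?thesis by simp
  qed
  have Qpos: "Q x > 0" if "0 \<le> x" "x \<le> 1" for x using u[OF that] v[OF that] by (simp add: Q_def)
  have dF: "(F has_real_derivative G x / Q x) (at x)" if "0 \<le> x" "x \<le> 1" for x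
    using F_deriv[OF u[OF that] v[OF that], of r] by (simp add: F_def G_def Q_def)
  have rpos: "r > 0" using rA pm by simp
  have G0: "G 0 > 0" using rA by (simp add: G_def Q_def A_B_def)
  have P: "G mu > 0" if "0 \<le> mu" "mu < nu" "nu \<le> 1" "G nu \<ge> 0" for mu nu
  proof (cases "A \<ge> 0")
    case True
    have id: "nu * G mu - (nu-mu) * G 0 - mu * G nu = r * (mu*nu*(nu-mu)*A*B)"
      by (simp add: G_def Q_def algebra_simps)
    have "r * (mu*nu*(nu-mu)*A*B) \<ge> 0" using rpos True Bpos that by simp
    moreover have "(nu-mu) * G 0 > 0" using that G0 by simp
    moreover have "mu * G nu \<ge> 0" using that by simp
    ultimately have "nu * G mu > 0" using id by linarith
    thus ?thesis using that by (simp add: zero_less_mult_iff)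
  next
    case False
    have a: "1+mu*A > 1+nu*A" using False that by (simp add: mult_strict_right_mono_neg)
    have b: "1-mu*B \<ge> 1-nu*B" using Bpos that by (simp add: mult_right_mono)
    have "Q mu > Q nu"
      unfolding Q_def using a b u[of nu] v[of nu] that
      by (smt (verit, best) mult_less_le_imp_less)
    hence "G mu > G nu" using rpos by (simp add: G_def)
    thus ?thesis using that by simp
  qed
  have F0: "F 0 = 0" by (simp add: F_def)
  have F1: "F 1 = 0" using ppos mpos by (simp add: F_def A_B_def rdef)
  have "F lam > 0"
  proof (cases "G lam > 0")
    case True
    have "F 0 < F lam"
    proof (rule DERIV_pos_imp_increasing[OF l0])
      fix x assume x: "0 \<le> x" "x \<le> lam"
      have "G x > 0" using True P[of x lam] x l1 by (cases "x = lam") auto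
      thus "\<exists>y. DERIV F x :> y \<and> y > 0"
        using dF[of x] Qpos[of x] x l1 by (intro exI[of _ "G x / Q x"]) auto
    qed
    thus ?thesis using F0 by simp
  next
    case False
    define l' where "l' = (lam+1)/2"
    have l': "lam < l'" "l' < 1" using l1 by (auto simp: l'_def)
    have Gneg: "G x < 0" if "lam < x" "x \<le> 1" for x
      using P[of lam x] that False l0 by force
    have "F l' \<le> F lam"
    proof (rule DERIV_nonpos_imp_nonincreasing[of lam l' F])
      show "lam \<le> l'" using l' by simp
      fix x assume x: "lam \<le> x" "x \<le> l'"
      have "G x \<le> 0" using False Gneg[of x] x l' by (cases "x = lam") auto
      thus "\<exists>y. DERIV F x :> y \<and> y \<le> 0"
        using dF[of x] Qpos[of x] x l' l0 by (intro exI[of _ "G x / Q x"]) (auto simp: divide_nonpos_pos)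
    qed
    moreover have "F 1 < F l'"
    proof (rule DERIV_neg_imp_decreasing[OF l'(2)])
      fix x assume x: "l' \<le> x" "x \<le> 1"
      have "G x < 0" using Gneg[of x] x l' by auto
      thus "\<exists>y. DERIV F x :> y \<and> y < 0"
        using dF[of x] Qpos[of x] x l' l0 by (intro exI[of _ "G x / Q x"]) (auto simp: divide_neg_pos)
    qed
    ultimately show ?thesis using F1 by simp
  qed
  moreover have "1+lam*A = 1-lam+lam*p" "1-lam*B = 1-lam+lam*m" by (auto simp: A_B_def algebra_simps)
  ultimately have "lam*r - ln (1-lam+lam*p) + ln (1-lam+lam*m) > 0" by (simp add: F_def)
  thus ?thesis by (simp add: rdef)
qed

lemma sum_bool3: "(\<Sum>z\<in>(UNIV::(bool\<times>bool\<times>bool) set). f z) =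
   f (True,True,True) + f (True,True,False) + f (True,False,True) + f (True,False,False) +
   f (False,True,True) + f (False,True,False) + f (False,False,True) + f (False,False,False)"
proof -
  have "(UNIV::(bool\<times>bool\<times>bool) set) = UNIV \<times> (UNIV \<times> UNIV)" by simp
  hence "(\<Sum>z\<in>(UNIV::(bool\<times>bool\<times>bool) set). f z) = (\<Sum>a\<in>UNIV. \<Sum>b\<in>UNIV \<times> UNIV. f (a,b))"
    by (simp add: sum.cartesian_product)
  also have "\<dots> = (\<Sum>a\<in>UNIV. \<Sum>b\<in>UNIV. \<Sum>c\<in>UNIV. f (a,b,c))"
    by (simp add: sum.cartesian_product)
  finally show ?thesis by (simp add: UNIV_bool algebra_simps)
qed

lemma compose_eq:
  "compose (tensor3 (BSC d1) (BSC d2) (BSC d3)) (B4 lam) y (z1,z2,z3)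
   = (1-lam)/8 + lam * (BSC d1 y z1 * BSC d2 y z2 * BSC d3 y z3)"
  unfolding compose_def sum_bool3
  apply (cases y; cases z1; cases z2; cases z3)
  apply (simp_all add: B4_def tensor3_def BSC_def)
  apply (simp_all add: field_simps)
  done

lemma aux_id: fixes a b la lb L :: real shows
 "(a/2 - 1/2*((a+b)/2))*(la - L) + (b/2 - 1/2*((a+b)/2))*(lb - L) = (a-b)/4*(la-lb)"
  by (simp add: field_simps)

lemma C_SKL_pos:
  fixes W :: "bool \<Rightarrow> 'b::finite \<Rightarrow> real"
  assumes pos: "\<And>x y. W x y > 0"
  shows "C_SKL W = ereal (\<Sum>y\<in>UNIV. (W True y - W False y)/4 * (ln (W True y) - ln (W False y)))"
proof -
  have t: "(\<Sum>x\<in>UNIV. fterm (W x y / 2) ((1/2) * ((W True y + W False y) / 2)))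
      = ereal ((W True y - W False y)/4 * (ln (W True y) - ln (W False y)))" for y
  proof -
    have a: "W True y > 0" "W False y > 0" using pos by auto
    define q where "q = (1/2) * ((W True y + W False y) / 2)"
    have qp: "q > 0" using a by (simp add: q_def)
    have ft: "fterm (W x y / 2) q = ereal ((W x y / 2 - q) * (ln (W x y) - ln (2*q)))" for x
    proof -
      have wp: "W x y > 0" using pos by auto
      have "fterm (W x y / 2) q = ereal q * ereal ((W x y / 2 / q - 1) * ln (W x y / 2 / q))"
        using qp wp by (simp add: fterm_def skl_f_def)
      also have "\<dots> = ereal ((W x y / 2 - q) * (ln (W x y) - ln (2*q)))"
        using qp wp by (simp add: ln_div field_simps)
      finally show ?thesis .
    qed
    have r: "(W True y / 2 - q) * (ln (W True y) - L) + (W False y / 2 - q) * (ln (W False y) - L)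
        = (W True y - W False y)/4 * (ln (W True y) - ln (W False y))" for L
      unfolding q_def by (rule aux_id)
    have "(\<Sum>x\<in>UNIV. fterm (W x y / 2) q) = fterm (W True y / 2) q + fterm (W False y / 2) q"
      by (simp add: UNIV_bool add.commute)
    also have "\<dots> = ereal ((W True y / 2 - q) * (ln (W True y) - ln (2*q)) + (W False y / 2 - q) * (ln (W False y) - ln (2*q)))"
      using ft[of True] ft[of False] by simp
    also have "\<dots> = ereal ((W True y - W False y)/4 * (ln (W True y) - ln (W False y)))"
      using r by simp
    finally show ?thesis unfolding q_def .
  qed
  have "C_SKL W = (\<Sum>y\<in>UNIV. \<Sum>x\<in>UNIV. fterm (W x y / 2) ((1/2) * ((W True y + W False y) / 2)))"
    unfolding C_SKL_def by (rule sum.swap)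
  also have "\<dots> = (\<Sum>y\<in>UNIV. ereal ((W True y - W False y)/4 * (ln (W True y) - ln (W False y))))"
    using t by simp
  also have "\<dots> = ereal (\<Sum>y\<in>UNIV. (W True y - W False y)/4 * (ln (W True y) - ln (W False y)))"
    by (simp add: sum_ereal)
  finally show ?thesis .
qed

lemma C_SKL_BSC0: "C_SKL (BSC 0) = \<infinity>"
  unfolding C_SKL_def by (simp add: UNIV_bool BSC_def fterm_def skl_f_def)


lemma perz_gt:
  fixes a1 a2 a3 b1 b2 b3 lam :: real
  assumes pos: "a1>0" "a2>0" "a3>0" "b1>0" "b2>0" "b3>0"
    and sum: "a1+b1=2" "a2+b2=2" "a3+b3=2"
    and pm: "a1*a2*a3 > b1*b2*b3"
    and l: "0 < lam" "lam < 1"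
  shows "ln (1-lam+lam*(a1*a2*a3)) - ln (1-lam+lam*(b1*b2*b3))
         < lam * (ln (a1*a2*a3) - ln (b1*b2*b3))"
proof -
  have A: "a1*a2*a3 - b1*b2*b3 < ln (a1*a2*a3) - ln (b1*b2*b3)"
    using lemmaA[OF pos sum pm] .
  have ab1: "a1*b1 \<le> 1" "a2*b2 \<le> 1" "a3*b3 \<le> 1"
  proof -
    have bb: "b1 = 2-a1" "b2 = 2-a2" "b3 = 2-a3" using sum by linarith+
    have "a1*b1 = 1 - (a1-1)^2" "a2*b2 = 1 - (a2-1)^2" "a3*b3 = 1 - (a3-1)^2"
      by (simp_all add: bb power2_eq_square algebra_simps)
    thus "a1*b1 \<le> 1" "a2*b2 \<le> 1" "a3*b3 \<le> 1" by auto
  qed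
  have "(a1*a2*a3)*(b1*b2*b3) = (a1*b1)*(a2*b2)*(a3*b3)" by (simp add: algebra_simps)
  also have "\<dots> \<le> 1"
  proof -
    have h: "(a1*b1)*(a2*b2) \<le> 1" using ab1 pos by (rule_tac mult_le_one) auto
    show ?thesis using h ab1 pos by (rule_tac mult_le_one) auto
  qed
  finally have pm1: "(a1*a2*a3)*(b1*b2*b3) \<le> 1" .
  have mpos: "b1*b2*b3 > 0" using pos by simp
  have "(b1*b2*b3)*(b1*b2*b3) < (a1*a2*a3)*(b1*b2*b3)"
    using pm mpos by (intro mult_strict_right_mono) auto
  hence m1: "b1*b2*b3 < 1" using pm1 mpos
    by (smt (verit) mult_le_cancel_left1 mult_less_cancel_left_pos)
  show ?thesis
    using keyF[OF mpos m1 pm refl A l] .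
qed

lemma perz_le:
  fixes a1 a2 a3 b1 b2 b3 lam :: real
  assumes pos: "a1>0" "a2>0" "a3>0" "b1>0" "b2>0" "b3>0"
    and sum: "a1+b1=2" "a2+b2=2" "a3+b3=2"
    and l: "0 \<le> lam" "lam \<le> 1"
  shows "(a1*a2*a3 - b1*b2*b3) * (ln (1-lam+lam*(a1*a2*a3)) - ln (1-lam+lam*(b1*b2*b3)))
         \<le> lam * ((a1*a2*a3 - b1*b2*b3) * (ln (a1*a2*a3) - ln (b1*b2*b3)))"
    and "a1*a2*a3 \<noteq> b1*b2*b3 \<Longrightarrow> 0 < lam \<Longrightarrow> lam < 1 \<Longrightarrow>
         (a1*a2*a3 - b1*b2*b3) * (ln (1-lam+lam*(a1*a2*a3)) - ln (1-lam+lam*(b1*b2*b3)))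
         < lam * ((a1*a2*a3 - b1*b2*b3) * (ln (a1*a2*a3) - ln (b1*b2*b3)))"
proof -
  define p m where "p = a1*a2*a3" "m = b1*b2*b3"
  have strict: "(p - m) * (ln (1-lam+lam*p) - ln (1-lam+lam*m)) < lam * ((p - m) * (ln p - ln m))"
    if "p \<noteq> m" "0 < lam" "lam < 1"
  proof (cases "p > m")
    case True
    have "ln (1-lam+lam*p) - ln (1-lam+lam*m) < lam * (ln p - ln m)"
      using perz_gt[OF pos sum True[unfolded p_m_def] that(2,3)] by (simp add: p_m_def)
    hence "(p - m) * (ln (1-lam+lam*p) - ln (1-lam+lam*m)) < (p-m) * (lam * (ln p - ln m))"
      using True by (intro mult_strict_left_mono) auto
    thus ?thesis by (simp add: algebra_simps)
  next
    case False
    hence mp: "m > p" using that by simp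
    have "ln (1-lam+lam*m) - ln (1-lam+lam*p) < lam * (ln m - ln p)"
      using perz_gt[of b1 b2 b3 a1 a2 a3 lam] pos sum mp that(2,3) by (simp add: p_m_def algebra_simps)
    hence "(m - p) * (ln (1-lam+lam*m) - ln (1-lam+lam*p)) < (m-p) * (lam * (ln m - ln p))"
      using mp by (intro mult_strict_left_mono) auto
    thus ?thesis by (simp add: algebra_simps)
  qed
  show "a1*a2*a3 \<noteq> b1*b2*b3 \<Longrightarrow> 0 < lam \<Longrightarrow> lam < 1 \<Longrightarrow>
         (a1*a2*a3 - b1*b2*b3) * (ln (1-lam+lam*(a1*a2*a3)) - ln (1-lam+lam*(b1*b2*b3)))
         < lam * ((a1*a2*a3 - b1*b2*b3) * (ln (a1*a2*a3) - ln (b1*b2*b3)))"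
    using strict by (simp add: p_m_def)
  have "(p - m) * (ln (1-lam+lam*p) - ln (1-lam+lam*m)) \<le> lam * ((p - m) * (ln p - ln m))"
  proof (cases "p = m \<or> lam = 0 \<or> lam = 1")
    case True thus ?thesis by auto
  next
    case False thus ?thesis using strict l by (intro less_imp_le) auto
  qed
  thus "(a1*a2*a3 - b1*b2*b3) * (ln (1-lam+lam*(a1*a2*a3)) - ln (1-lam+lam*(b1*b2*b3)))
         \<le> lam * ((a1*a2*a3 - b1*b2*b3) * (ln (a1*a2*a3) - ln (b1*b2*b3)))"
    by (simp add: p_m_def)
qed


lemma Tb:
  fixes a1 a2 a3 b1 b2 b3 lam wt wf :: real
  assumes pos: "a1>0" "a2>0" "a3>0" "b1>0" "b2>0" "b3>0"
    and sum: "a1+b1=2" "a2+b2=2" "a3+b3=2"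
    and l: "0 \<le> lam" "lam \<le> 1"
    and wt: "wt = (1-lam)/8 + lam*((a1/2)*(a2/2)*(a3/2))"
    and wf: "wf = (1-lam)/8 + lam*((b1/2)*(b2/2)*(b3/2))"
  shows "(wt - wf)/4*(ln wt - ln wf) \<le> lam^2 * ((a1*a2*a3 - b1*b2*b3)/32*(ln (a1*a2*a3) - ln (b1*b2*b3)))"
    and "a1*a2*a3 \<noteq> b1*b2*b3 \<Longrightarrow> 0 < lam \<Longrightarrow> lam < 1 \<Longrightarrow>
      (wt - wf)/4*(ln wt - ln wf) < lam^2 * ((a1*a2*a3 - b1*b2*b3)/32*(ln (a1*a2*a3) - ln (b1*b2*b3)))"
proof -
  define p m where "p = a1*a2*a3" "m = b1*b2*b3"
  have ppos: "p > 0" "m > 0" using pos by (auto simp: p_m_def)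
  have upos: "1-lam+lam*p > 0" "1-lam+lam*m > 0"
  proof -
    show "1-lam+lam*p > 0" using l ppos by (cases "lam = 0") (auto intro: add_nonneg_pos)
    show "1-lam+lam*m > 0" using l ppos by (cases "lam = 0") (auto intro: add_nonneg_pos)
  qed
  have wt': "wt = (1-lam+lam*p)/8" and wf': "wf = (1-lam+lam*m)/8"
    using wt wf by (auto simp: p_m_def field_simps)
  have lwt: "ln wt - ln wf = ln (1-lam+lam*p) - ln (1-lam+lam*m)"
    using upos by (simp add: wt' wf' ln_div)
  have eq: "(wt - wf)/4*(ln wt - ln wf) = lam/32 * ((p - m) * (ln (1-lam+lam*p) - ln (1-lam+lam*m)))"
    unfolding lwt by (simp add: wt' wf' field_simps)
  have eq2: "lam^2 * ((p - m)/32*(ln p - ln m)) = lam/32 * (lam * ((p - m) * (ln p - ln m)))"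
    by (simp add: power2_eq_square field_simps)
  have "lam/32 * ((p - m) * (ln (1-lam+lam*p) - ln (1-lam+lam*m))) \<le> lam/32 * (lam * ((p - m) * (ln p - ln m)))"
    using perz_le(1)[OF pos sum l] l by (intro mult_left_mono) (auto simp: p_m_def)
  hence "(wt - wf)/4*(ln wt - ln wf) \<le> lam^2 * ((p - m)/32*(ln p - ln m))"
    unfolding eq eq2 .
  thus "(wt - wf)/4*(ln wt - ln wf) \<le> lam^2 * ((a1*a2*a3 - b1*b2*b3)/32*(ln (a1*a2*a3) - ln (b1*b2*b3)))"
    unfolding p_m_def .
  assume h: "a1*a2*a3 \<noteq> b1*b2*b3" "0 < lam" "lam < 1"
  have "lam/32 * ((p - m) * (ln (1-lam+lam*p) - ln (1-lam+lam*m))) < lam/32 * (lam * ((p - m) * (ln p - ln m)))"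
    using perz_le(2)[OF pos sum l h] h by (intro mult_strict_left_mono) (auto simp: p_m_def)
  hence "(wt - wf)/4*(ln wt - ln wf) < lam^2 * ((p - m)/32*(ln p - ln m))"
    unfolding eq eq2 .
  thus "(wt - wf)/4*(ln wt - ln wf) < lam^2 * ((a1*a2*a3 - b1*b2*b3)/32*(ln (a1*a2*a3) - ln (b1*b2*b3)))"
    unfolding p_m_def .
qed

definition cB :: "real \<Rightarrow> real" where "cB d = (1-2*d)/2 * (ln (1-d) - ln d)"

lemma lnpm:
  fixes d1 d2 d3 :: real and z1 z2 z3 :: bool
  assumes "0<d1" "d1<1" "0<d2" "d2<1" "0<d3" "d3<1"
  shows "ln ((2*BSC d1 True z1)*(2*BSC d2 True z2)*(2*BSC d3 True z3))
       - ln ((2*BSC d1 False z1)*(2*BSC d2 False z2)*(2*BSC d3 False z3))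
     = (if z1 then 1 else -1) * (ln (1-d1) - ln d1) + (if z2 then 1 else -1) * (ln (1-d2) - ln d2)
       + (if z3 then 1 else -1) * (ln (1-d3) - ln d3)"
proof -
  have p: "\<And>y z. 0 < BSC d1 y z" "\<And>y z. 0 < BSC d2 y z" "\<And>y z. 0 < BSC d3 y z"
    using assms by (auto simp: BSC_def)
  have e: "ln ((2*BSC d1 y1 z1)*(2*BSC d2 y2 z2)*(2*BSC d3 y3 z3))
      = 3 * ln 2 + ln (BSC d1 y1 z1) + ln (BSC d2 y2 z2) + ln (BSC d3 y3 z3)" for y1 y2 y3
  proof -
    have l8: "ln (8::real) = 3 * ln 2" using ln_realpow[of 2 3] by simp
    have nz: "BSC d1 y1 z1 \<noteq> 0" "BSC d2 y2 z2 \<noteq> 0" "BSC d3 y3 z3 \<noteq> 0"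
      using p by (metis less_irrefl)+
    show ?thesis using p nz by (simp add: ln_mult l8)
  qed
  show ?thesis unfolding e
    by (cases z1; cases z2; cases z3) (simp_all add: BSC_def)
qed

lemma Rsum:
  fixes d1 d2 d3 :: real
  assumes "0<d1" "d1<1" "0<d2" "d2<1" "0<d3" "d3<1"
  shows "(\<Sum>z\<in>(UNIV::(bool\<times>bool\<times>bool) set). case z of (z1,z2,z3) \<Rightarrow>
      ((2*BSC d1 True z1)*(2*BSC d2 True z2)*(2*BSC d3 True z3)
       - (2*BSC d1 False z1)*(2*BSC d2 False z2)*(2*BSC d3 False z3))/32 *
      (ln ((2*BSC d1 True z1)*(2*BSC d2 True z2)*(2*BSC d3 True z3))
       - ln ((2*BSC d1 False z1)*(2*BSC d2 False z2)*(2*BSC d3 False z3))))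
   = cB d1 + cB d2 + cB d3"
  unfolding sum_bool3 lnpm[OF assms]
  by (simp add: BSC_def cB_def field_simps)


lemma prod3_strict:
  fixes x1 x2 x3 y1 y2 y3 :: real
  assumes "0<x1" "0<x2" "0<x3" "x1\<le>y1" "x2\<le>y2" "x3\<le>y3" "x1<y1 \<or> x2<y2 \<or> x3<y3"
  shows "x1*x2*x3 < y1*y2*y3"
proof -
  have p: "0 < x1*x2" "0 < x2*x3" "0<x1*x3" using assms by auto
  have yy: "0<y1" "0<y2" "0<y3" using assms by auto
  consider "x1<y1" | "x2<y2" | "x3<y3" using assms by blast
  thus ?thesis
  proof cases
    case 1
    have "x1*(x2*x3) < y1*(x2*x3)" using 1 p by (intro mult_strict_right_mono) auto
    also have "\<dots> \<le> y1*(y2*y3)" using assms yy by (intro mult_left_mono mult_mono) auto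
    finally show ?thesis by (simp add: mult.assoc)
  next
    case 2
    have "x2*(x1*x3) < y2*(x1*x3)" using 2 p by (intro mult_strict_right_mono) auto
    also have "\<dots> \<le> y2*(y1*y3)" using assms yy by (intro mult_left_mono mult_mono) auto
    finally show ?thesis by (simp add: algebra_simps)
  next
    case 3
    have "x3*(x1*x2) < y3*(x1*x2)" using 3 p by (intro mult_strict_right_mono) auto
    also have "\<dots> \<le> y3*(y1*y2)" using assms yy by (intro mult_left_mono mult_mono) auto
    finally show ?thesis by (simp add: algebra_simps)
  qed
qed

lemma core:
  fixes W :: "bool \<Rightarrow> bool\<times>bool\<times>bool \<Rightarrow> real" and d1 d2 d3 lam :: real
  assumes d: "0<d1" "d1\<le>1/2" "0<d2" "d2\<le>1/2" "0<d3" "d3\<le>1/2"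
    and l: "0\<le>lam" "lam\<le>1"
    and Wd: "\<And>y z1 z2 z3. W y (z1,z2,z3) = (1-lam)/8 + lam*(BSC d1 y z1 * BSC d2 y z2 * BSC d3 y z3)"
  shows "(\<Sum>z\<in>UNIV. (W True z - W False z)/4*(ln (W True z) - ln (W False z))) \<le> lam^2*(cB d1 + cB d2 + cB d3)"
    and "0<lam \<Longrightarrow> lam<1 \<Longrightarrow> min d1 (min d2 d3) < 1/2 \<Longrightarrow>
      (\<Sum>z\<in>UNIV. (W True z - W False z)/4*(ln (W True z) - ln (W False z))) < lam^2*(cB d1 + cB d2 + cB d3)"
proof -
  define R where "R = (\<lambda>z. case z of (z1,z2,z3) \<Rightarrow>
      ((2*BSC d1 True z1)*(2*BSC d2 True z2)*(2*BSC d3 True z3)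
       - (2*BSC d1 False z1)*(2*BSC d2 False z2)*(2*BSC d3 False z3))/32 *
      (ln ((2*BSC d1 True z1)*(2*BSC d2 True z2)*(2*BSC d3 True z3))
       - ln ((2*BSC d1 False z1)*(2*BSC d2 False z2)*(2*BSC d3 False z3))))"
  define T where "T = (\<lambda>z. (W True z - W False z)/4*(ln (W True z) - ln (W False z)))"
  have Rs: "(\<Sum>z\<in>UNIV. R z) = cB d1 + cB d2 + cB d3"
    unfolding R_def using d by (intro Rsum) auto
  have bpos: "\<And>d y z. 0<d \<Longrightarrow> d\<le>1/2 \<Longrightarrow> 0 < 2*BSC d y z" by (auto simp: BSC_def)
  have bsum: "\<And>d z. 2*BSC d True z + 2*BSC d False z = 2" by (auto simp: BSC_def)
  have TR: "T (z1,z2,z3) \<le> lam^2 * R (z1,z2,z3)" for z1 z2 z3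
    unfolding T_def R_def prod.case
    by (rule Tb(1)[OF bpos[OF d(1,2)] bpos[OF d(3,4)] bpos[OF d(5,6)]
          bpos[OF d(1,2)] bpos[OF d(3,4)] bpos[OF d(5,6)] bsum bsum bsum l])
       (simp_all add: Wd)
  have TRall: "T z \<le> lam^2 * R z" for z using TR by (cases z) auto
  show "(\<Sum>z\<in>UNIV. (W True z - W False z)/4*(ln (W True z) - ln (W False z))) \<le> lam^2*(cB d1 + cB d2 + cB d3)"
  proof -
    have "(\<Sum>z\<in>UNIV. T z) \<le> (\<Sum>z\<in>UNIV. lam^2 * R z)" using TRall by (intro sum_mono) auto
    thus ?thesis by (simp add: T_def sum_distrib_left[symmetric] Rs)
  qed
  assume h: "0<lam" "lam<1" "min d1 (min d2 d3) < 1/2"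
  have ne: "(2*BSC d1 True True)*(2*BSC d2 True True)*(2*BSC d3 True True)
      \<noteq> (2*BSC d1 False True)*(2*BSC d2 False True)*(2*BSC d3 False True)"
  proof -
    have "(2*d1)*(2*d2)*(2*d3) < (2*(1-d1))*(2*(1-d2))*(2*(1-d3))"
      using h(3) d by (intro prod3_strict) (auto simp: min_def split: if_splits)
    thus ?thesis by (simp add: BSC_def)
  qed
  have TRs: "T (True,True,True) < lam^2 * R (True,True,True)"
    unfolding T_def R_def prod.case
    apply (rule Tb(2)[OF bpos[OF d(1,2)] bpos[OF d(3,4)] bpos[OF d(5,6)]
          bpos[OF d(1,2)] bpos[OF d(3,4)] bpos[OF d(5,6)] bsum bsum bsum l])
        apply (simp add: Wd)
       apply (simp add: Wd)
      apply (rule ne)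
     apply (rule h(1))
    by (rule h(2))
  have "(\<Sum>z\<in>UNIV. T z) < (\<Sum>z\<in>UNIV. lam^2 * R z)"
    using TRall TRs by (intro sum_strict_mono_ex1) auto
  thus "(\<Sum>z\<in>UNIV. (W True z - W False z)/4*(ln (W True z) - ln (W False z))) < lam^2*(cB d1 + cB d2 + cB d3)"
    by (simp add: T_def sum_distrib_left[symmetric] Rs)
qed


lemma CB_formula: assumes "0<d" "d\<le>1/2" shows "C_SKL (BSC d) = ereal (cB d)"
proof -
  have "C_SKL (BSC d) = ereal (\<Sum>y\<in>UNIV. (BSC d True y - BSC d False y)/4 * (ln (BSC d True y) - ln (BSC d False y)))"
    using assms by (intro C_SKL_pos) (auto simp: BSC_def)
  also have "(\<Sum>y\<in>UNIV. (BSC d True y - BSC d False y)/4 * (ln (BSC d True y) - ln (BSC d False y))) = cB d"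
    by (simp add: UNIV_bool BSC_def cB_def field_simps)
  finally show ?thesis .
qed

lemma cB_nonneg: assumes "0<d" "d\<le>1/2" shows "cB d \<ge> 0"
proof -
  have "ln d \<le> ln (1-d)" using assms by (subst ln_le_cancel_iff) auto
  moreover have "1-2*d \<ge> 0" using assms by auto
  ultimately show ?thesis by (simp add: cB_def)
qed

lemma C_SKL_BSC_nonneg: assumes "0\<le>d" "d\<le>1/2" shows "C_SKL (BSC d) \<ge> 0"
proof (cases "d = 0")
  case True thus ?thesis by (simp add: C_SKL_BSC0)
next
  case False thus ?thesis using assms CB_formula[of d] cB_nonneg[of d] by auto
qed

theorem mainTheorem11:
  fixes lam \<Delta>1 \<Delta>2 \<Delta>3 :: real
  assumes "0 \<le> lam" "lam \<le> 1"
    and "0 \<le> \<Delta>1" "\<Delta>1 \<le> 1/2" "0 \<le> \<Delta>2" "\<Delta>2 \<le> 1/2" "0 \<le> \<Delta>3" "\<Delta>3 \<le> 1/2"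
  shows "C_SKL (compose (tensor3 (BSC \<Delta>1) (BSC \<Delta>2) (BSC \<Delta>3)) (B4 lam))
           \<le> ereal (lam ^ 2) * (C_SKL (BSC \<Delta>1) + C_SKL (BSC \<Delta>2) + C_SKL (BSC \<Delta>3))
    \<and> (0 < lam \<and> lam < 1 \<and> min \<Delta>1 (min \<Delta>2 \<Delta>3) < 1/2 \<longrightarrow>
         C_SKL (compose (tensor3 (BSC \<Delta>1) (BSC \<Delta>2) (BSC \<Delta>3)) (B4 lam))
           < ereal (lam ^ 2) * (C_SKL (BSC \<Delta>1) + C_SKL (BSC \<Delta>2) + C_SKL (BSC \<Delta>3)))"
proof -
  define W where "W = compose (tensor3 (BSC \<Delta>1) (BSC \<Delta>2) (BSC \<Delta>3)) (B4 lam)"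
  define S where "S = C_SKL (BSC \<Delta>1) + C_SKL (BSC \<Delta>2) + C_SKL (BSC \<Delta>3)"
  have Wd: "\<And>y z1 z2 z3. W y (z1,z2,z3) = (1-lam)/8 + lam*(BSC \<Delta>1 y z1 * BSC \<Delta>2 y z2 * BSC \<Delta>3 y z3)"
    unfolding W_def by (rule compose_eq)
  have bnn: "\<And>y z. 0 \<le> BSC \<Delta>1 y z" "\<And>y z. 0 \<le> BSC \<Delta>2 y z" "\<And>y z. 0 \<le> BSC \<Delta>3 y z"
    using assms by (auto simp: BSC_def)
  have Wpos1: "W y z > 0" if "lam < 1" for y z
  proof -
    obtain z1 z2 z3 where z: "z = (z1,z2,z3)" by (cases z) auto
    have "0 \<le> lam*(BSC \<Delta>1 y z1 * BSC \<Delta>2 y z2 * BSC \<Delta>3 y z3)" using bnn assms by simp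
    moreover have "(1-lam)/8 > 0" using that by simp
    ultimately show ?thesis unfolding z Wd by linarith
  qed
  have Wpos2: "W y z > 0" if "0<lam" "0<\<Delta>1" "0<\<Delta>2" "0<\<Delta>3" for y z
  proof -
    obtain z1 z2 z3 where z: "z = (z1,z2,z3)" by (cases z) auto
    have "0 < BSC \<Delta>1 y z1" "0 < BSC \<Delta>2 y z2" "0 < BSC \<Delta>3 y z3" using that assms by (auto simp: BSC_def)
    hence "0 < lam*(BSC \<Delta>1 y z1 * BSC \<Delta>2 y z2 * BSC \<Delta>3 y z3)" using that by simp
    moreover have "(1-lam)/8 \<ge> 0" using assms by simp
    ultimately show ?thesis unfolding z Wd by linarith
  qed
  have Snn: "C_SKL (BSC \<Delta>1) \<ge> 0" "C_SKL (BSC \<Delta>2) \<ge> 0" "C_SKL (BSC \<Delta>3) \<ge> 0"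
    using assms C_SKL_BSC_nonneg by auto
  have main: "C_SKL W \<le> ereal (lam ^ 2) * S \<and> (0 < lam \<and> lam < 1 \<and> min \<Delta>1 (min \<Delta>2 \<Delta>3) < 1/2 \<longrightarrow> C_SKL W < ereal (lam ^ 2) * S)"
  proof (cases "lam = 0")
    case True
    have "C_SKL W = ereal (\<Sum>y\<in>UNIV. (W True y - W False y)/4 * (ln (W True y) - ln (W False y)))"
      using Wpos1 True by (intro C_SKL_pos) auto
    also have "\<dots> = 0"
    proof -
      have "W True y = W False y" for y using True by (cases y) (simp add: Wd)
      thus ?thesis by simp
    qed
    finally show ?thesis using True by (simp add: zero_ereal_def[symmetric])
  next
    case lpos: False
    hence lpos: "0 < lam" using assms by simp
    show ?thesis
    proof (cases "\<Delta>1 = 0 \<or> \<Delta>2 = 0 \<or> \<Delta>3 = 0")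
      case True
      have "S = \<infinity>" using True Snn by (auto simp: S_def C_SKL_BSC0)
      hence Sinf: "ereal (lam ^ 2) * S = \<infinity>" using lpos by simp
      have "lam < 1 \<Longrightarrow> C_SKL W < \<infinity>"
      proof -
        assume "lam < 1"
        hence "C_SKL W = ereal (\<Sum>y\<in>UNIV. (W True y - W False y)/4 * (ln (W True y) - ln (W False y)))"
          using Wpos1 by (intro C_SKL_pos) auto
        thus ?thesis by simp
      qed
      thus ?thesis using Sinf by simp
    next
      case False
      hence dpos: "0<\<Delta>1" "0<\<Delta>2" "0<\<Delta>3" using assms by auto
      have CW: "C_SKL W = ereal (\<Sum>y\<in>UNIV. (W True y - W False y)/4 * (ln (W True y) - ln (W False y)))"
        using Wpos2[OF lpos dpos] by (intro C_SKL_pos) auto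
      have SS: "ereal (lam ^ 2) * S = ereal (lam^2*(cB \<Delta>1 + cB \<Delta>2 + cB \<Delta>3))"
        using dpos assms by (simp add: S_def CB_formula)
      have c: "0<\<Delta>1" "\<Delta>1\<le>1/2" "0<\<Delta>2" "\<Delta>2\<le>1/2" "0<\<Delta>3" "\<Delta>3\<le>1/2" using dpos assms by auto
      show ?thesis unfolding CW SS
        using core[OF c assms(1,2) Wd] by simp
    qed
  qed
  thus ?thesis unfolding W_def S_def .
qed

end
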